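(* Let $(E,\mu)$ and $(F,\nu)$ be fuzzy Riesz spaces and $T:E\rightarrow F$ a fuzzy Riesz homomorphism. (1) If $B$ is a fuzzy ideal in $T(E)$, then $T^{-1}(B)$ is a fuzzy ideal in $E$. (2) If $B_1$ is a fuzzy ideal in $F$, then $T^{-1}(B_1)$ is a fuzzy ideal in $E$.
   Context: A fuzzy order on a real vector space $E$ is a map $\mu:E\times E\to[0,1]$ with $\mu(x,x)=1$; $\mu(x,y)+\mu(y,x)>1$ implies $x=y$; and $\mu(x,z)\ge\sup_{y}\min(\mu(x,y),\mu(y,z))$. Write $x\le y$ for $\mu(x,y)>\frac12$; suprema/infima are taken with respect to this relation. $(E,\mu)$ is a fuzzy ordered linear space if $\mu(x_1,x_2)>\frac12$ implies $\mu(x_1,x_2)\le\mu(x_1+x,x_2+x)$ for all $x$ and $\mu(x_1,x_2)\le\mu(\alpha x_1,\alpha x_2)$ for all $\alpha>0$; it is a fuzzy Riesz space if $x\vee y=\sup\{x,y\}$ and $x\wedge y=\inf\{x,y\}$ exist for all $x,y$. $|x|=x\vee(-x)$. A fuzzy Riesz homomorphism is a linear map with $T(x\vee y)=Tx\vee Ty$; $T(E)$ is a fuzzy Riesz subspace of $F$ with the restricted fuzzy order. A subset $A$ is fuzzy solid if $\mu(|x|,|y|)>\frac12$ and $y\in A$ imply $x\in A$; a fuzzy ideal is a fuzzy solid vector subspace. $T^{-1}(B)=\{x\in E: Tx\in B\}$. *)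

theory Defs
  imports "HOL-Analysis.Analysis"
begin

text \<open>Fuzzy orders, relativised to a carrier set S (S = UNIV for the whole space,
  S = range T for the fuzzy Riesz subspace T(E) with the restricted fuzzy order).\<close>

definition fle :: "('a \<Rightarrow> 'a \<Rightarrow> real) \<Rightarrow> 'a \<Rightarrow> 'a \<Rightarrow> bool" where
  "fle \<mu> x y \<longleftrightarrow> \<mu> x y > 1/2"

definition fuzzy_order_on :: "'a set \<Rightarrow> ('a \<Rightarrow> 'a \<Rightarrow> real) \<Rightarrow> bool" where
  "fuzzy_order_on S \<mu> \<longleftrightarrow>
     (\<forall>x\<in>S. \<forall>y\<in>S. 0 \<le> \<mu> x y \<and> \<mu> x y \<le> 1) \<and>
     (\<forall>x\<in>S. \<mu> x x = 1) \<and>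
     (\<forall>x\<in>S. \<forall>y\<in>S. \<mu> x y + \<mu> y x > 1 \<longrightarrow> x = y) \<and>
     (\<forall>x\<in>S. \<forall>z\<in>S. \<mu> x z \<ge> (SUP y\<in>S. min (\<mu> x y) (\<mu> y z)))"

definition is_fub :: "'a set \<Rightarrow> ('a \<Rightarrow> 'a \<Rightarrow> real) \<Rightarrow> 'a set \<Rightarrow> 'a \<Rightarrow> bool" where
  "is_fub S \<mu> A u \<longleftrightarrow> u \<in> S \<and> (\<forall>a\<in>A. fle \<mu> a u)"

definition is_flb :: "'a set \<Rightarrow> ('a \<Rightarrow> 'a \<Rightarrow> real) \<Rightarrow> 'a set \<Rightarrow> 'a \<Rightarrow> bool" where
  "is_flb S \<mu> A u \<longleftrightarrow> u \<in> S \<and> (\<forall>a\<in>A. fle \<mu> u a)"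

definition is_fsup :: "'a set \<Rightarrow> ('a \<Rightarrow> 'a \<Rightarrow> real) \<Rightarrow> 'a set \<Rightarrow> 'a \<Rightarrow> bool" where
  "is_fsup S \<mu> A s \<longleftrightarrow> is_fub S \<mu> A s \<and> (\<forall>u. is_fub S \<mu> A u \<longrightarrow> fle \<mu> s u)"

definition is_finf :: "'a set \<Rightarrow> ('a \<Rightarrow> 'a \<Rightarrow> real) \<Rightarrow> 'a set \<Rightarrow> 'a \<Rightarrow> bool" where
  "is_finf S \<mu> A s \<longleftrightarrow> is_flb S \<mu> A s \<and> (\<forall>u. is_flb S \<mu> A u \<longrightarrow> fle \<mu> u s)"

definition fsup :: "'a set \<Rightarrow> ('a \<Rightarrow> 'a \<Rightarrow> real) \<Rightarrow> 'a \<Rightarrow> 'a \<Rightarrow> 'a" where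
  "fsup S \<mu> x y = (THE s. is_fsup S \<mu> {x, y} s)"

definition fabs :: "'a set \<Rightarrow> ('a \<Rightarrow> 'a \<Rightarrow> real) \<Rightarrow> 'a::real_vector \<Rightarrow> 'a" where
  "fabs S \<mu> x = fsup S \<mu> x (- x)"

definition fuzzy_ordered_linear_space :: "'a::real_vector set \<Rightarrow> ('a \<Rightarrow> 'a \<Rightarrow> real) \<Rightarrow> bool" where
  "fuzzy_ordered_linear_space S \<mu> \<longleftrightarrow> subspace S \<and> fuzzy_order_on S \<mu> \<and>
     (\<forall>x1\<in>S. \<forall>x2\<in>S. \<mu> x1 x2 > 1/2 \<longrightarrow>
        (\<forall>x\<in>S. \<mu> x1 x2 \<le> \<mu> (x1 + x) (x2 + x)) \<and>
        (\<forall>\<alpha>::real. \<alpha> > 0 \<longrightarrow> \<mu> x1 x2 \<le> \<mu> (\<alpha> *\<^sub>R x1) (\<alpha> *\<^sub>R x2)))"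

definition fuzzy_riesz_space :: "'a::real_vector set \<Rightarrow> ('a \<Rightarrow> 'a \<Rightarrow> real) \<Rightarrow> bool" where
  "fuzzy_riesz_space S \<mu> \<longleftrightarrow> fuzzy_ordered_linear_space S \<mu> \<and>
     (\<forall>x\<in>S. \<forall>y\<in>S. (\<exists>s. is_fsup S \<mu> {x, y} s) \<and> (\<exists>i. is_finf S \<mu> {x, y} i))"

definition fuzzy_riesz_hom ::
  "('a::real_vector \<Rightarrow> 'a \<Rightarrow> real) \<Rightarrow> ('b::real_vector \<Rightarrow> 'b \<Rightarrow> real) \<Rightarrow> ('a \<Rightarrow> 'b) \<Rightarrow> bool" where
  "fuzzy_riesz_hom \<mu> \<nu> T \<longleftrightarrow> linear T \<and>
     (\<forall>x y. T (fsup UNIV \<mu> x y) = fsup UNIV \<nu> (T x) (T y))"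

definition fuzzy_solid :: "'a::real_vector set \<Rightarrow> ('a \<Rightarrow> 'a \<Rightarrow> real) \<Rightarrow> 'a set \<Rightarrow> bool" where
  "fuzzy_solid S \<mu> A \<longleftrightarrow> A \<subseteq> S \<and>
     (\<forall>x\<in>S. \<forall>y\<in>A. \<mu> (fabs S \<mu> x) (fabs S \<mu> y) > 1/2 \<longrightarrow> x \<in> A)"

definition fuzzy_ideal :: "'a::real_vector set \<Rightarrow> ('a \<Rightarrow> 'a \<Rightarrow> real) \<Rightarrow> 'a set \<Rightarrow> bool" where
  "fuzzy_ideal S \<mu> A \<longleftrightarrow> subspace A \<and> fuzzy_solid S \<mu> A"

end

theory Submission
  imports Defs
begin

lemma fo_refl: "fuzzy_order_on S \<mu> \<Longrightarrow> x \<in> S \<Longrightarrow> \<mu> x x = 1"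
  unfolding fuzzy_order_on_def
  apply (drule conjunct2, drule conjunct1)
  by (erule bspec)

lemma fo_antisym: "fuzzy_order_on S \<mu> \<Longrightarrow> x \<in> S \<Longrightarrow> y \<in> S \<Longrightarrow> \<mu> x y + \<mu> y x > 1 \<Longrightarrow> x = y"
  unfolding fuzzy_order_on_def
  apply (drule conjunct2, drule conjunct2, drule conjunct1)
  by blast

lemma fsup_unique:
  assumes "fuzzy_order_on UNIV \<mu>" "is_fsup S \<mu> A s" "is_fsup S \<mu> A s'"
  shows "s = s'"
proof -
  have "fle \<mu> s s'" "fle \<mu> s' s" using assms(2,3) unfolding is_fsup_def by auto
  then have "\<mu> s s' + \<mu> s' s > 1" unfolding fle_def by simp
  then show ?thesis using fo_antisym[OF assms(1)] by simp
qed

lemma fsup_eq: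
  assumes "fuzzy_order_on UNIV \<mu>" "is_fsup S \<mu> {x, y} s"
  shows "fsup S \<mu> x y = s"
  unfolding fsup_def
proof (rule the_equality)
  show "is_fsup S \<mu> {x, y} s" by (rule assms(2))
next
  fix t assume "is_fsup S \<mu> {x, y} t"
  then show "t = s" using fsup_unique[OF assms(1)] assms(2) by metis
qed

lemma fsup_le:
  assumes "fuzzy_order_on UNIV \<mu>" "\<mu> a b > 1/2"
  shows "is_fsup UNIV \<mu> {a, b} b"
proof -
  have "\<mu> b b = 1" using fo_refl[OF assms(1)] by simp
  then have ub: "is_fub UNIV \<mu> {a, b} b" using assms(2) unfolding is_fub_def fle_def by simp
  have "\<forall>u. is_fub UNIV \<mu> {a, b} u \<longrightarrow> fle \<mu> b u" unfolding is_fub_def by simp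
  then show ?thesis using ub unfolding is_fsup_def by blast
qed

lemma riesz_order: "fuzzy_riesz_space UNIV \<mu> \<Longrightarrow> fuzzy_order_on UNIV \<mu>"
  unfolding fuzzy_riesz_space_def fuzzy_ordered_linear_space_def by blast

lemma hom_fsup_is:
  assumes "fuzzy_riesz_space UNIV \<nu>" "fuzzy_riesz_hom \<mu> \<nu> T"
  shows "is_fsup UNIV \<nu> {T x, T y} (T (fsup UNIV \<mu> x y))"
proof -
  obtain s where s: "is_fsup UNIV \<nu> {T x, T y} s"
    using assms(1) unfolding fuzzy_riesz_space_def by blast
  have "fsup UNIV \<nu> (T x) (T y) = s" using fsup_eq[OF riesz_order[OF assms(1)] s] .
  then show ?thesis using s assms(2) unfolding fuzzy_riesz_hom_def by simp
qed

lemma hom_mono: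
  assumes "fuzzy_riesz_space UNIV \<mu>" "fuzzy_riesz_space UNIV \<nu>" "fuzzy_riesz_hom \<mu> \<nu> T"
    "\<mu> a b > 1/2"
  shows "\<nu> (T a) (T b) > 1/2"
proof -
  have "fsup UNIV \<mu> a b = b"
    using fsup_eq[OF riesz_order[OF assms(1)] fsup_le[OF riesz_order[OF assms(1)] assms(4)]] .
  then have "is_fsup UNIV \<nu> {T a, T b} (T b)" using hom_fsup_is[OF assms(2,3), of a b] by simp
  then show ?thesis unfolding is_fsup_def is_fub_def fle_def by auto
qed

lemma hom_abs:
  assumes "fuzzy_riesz_space UNIV \<nu>" "fuzzy_riesz_hom \<mu> \<nu> T"
  shows "is_fsup UNIV \<nu> {T x, - T x} (T (fabs UNIV \<mu> x))"
proof -
  have "linear T" using assms(2) unfolding fuzzy_riesz_hom_def by blast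
  then have "T (- x) = - T x" by (simp add: linear_neg)
  then show ?thesis using hom_fsup_is[OF assms, of x "- x"] unfolding fabs_def by simp
qed

lemma abs_range:
  assumes "fuzzy_riesz_space UNIV \<nu>" "fuzzy_riesz_hom \<mu> \<nu> T"
  shows "fabs (range T) \<nu> (T x) = T (fabs UNIV \<mu> x)"
proof -
  have h: "is_fsup UNIV \<nu> {T x, - T x} (T (fabs UNIV \<mu> x))" by (rule hom_abs[OF assms])
  have "is_fsup (range T) \<nu> {T x, - T x} (T (fabs UNIV \<mu> x))"
    using h unfolding is_fsup_def is_fub_def by auto
  then show ?thesis unfolding fabs_def by (rule fsup_eq[OF riesz_order[OF assms(1)]])
qed

lemma abs_univ:
  assumes "fuzzy_riesz_space UNIV \<nu>" "fuzzy_riesz_hom \<mu> \<nu> T"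
  shows "fabs UNIV \<nu> (T x) = T (fabs UNIV \<mu> x)"
  unfolding fabs_def using fsup_eq[OF riesz_order[OF assms(1)] hom_abs[OF assms]]
  by (simp add: fabs_def)

lemma sub_vimage:
  assumes "linear T" "subspace B"
  shows "subspace (T -` B)"
  using assms unfolding subspace_def
  by (auto simp: linear_0 linear_add linear_scale)

theorem theorem2p5:
  fixes \<mu> :: "'a::real_vector \<Rightarrow> 'a \<Rightarrow> real" and \<nu> :: "'b::real_vector \<Rightarrow> 'b \<Rightarrow> real"
    and T :: "'a \<Rightarrow> 'b"
  assumes "fuzzy_riesz_space UNIV \<mu>" and "fuzzy_riesz_space UNIV \<nu>"
    and "fuzzy_riesz_hom \<mu> \<nu> T"
  shows "(\<forall>B. fuzzy_ideal (range T) \<nu> B \<longrightarrow> fuzzy_ideal UNIV \<mu> (T -` B)) \<and>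
         (\<forall>B1. fuzzy_ideal UNIV \<nu> B1 \<longrightarrow> fuzzy_ideal UNIV \<mu> (T -` B1))"
proof -
  have lin: "linear T" using assms(3) unfolding fuzzy_riesz_hom_def by blast
  have mono: "\<And>a b. \<mu> a b > 1/2 \<Longrightarrow> \<nu> (T a) (T b) > 1/2"
    using hom_mono[OF assms] by blast
  show ?thesis
  proof (intro conjI allI impI)
    fix B assume B: "fuzzy_ideal (range T) \<nu> B"
    show "fuzzy_ideal UNIV \<mu> (T -` B)"
      unfolding fuzzy_ideal_def fuzzy_solid_def
    proof (intro conjI ballI impI)
      show "subspace (T -` B)" using B sub_vimage[OF lin] unfolding fuzzy_ideal_def by blast
    next
      fix x y assume y: "y \<in> T -` B" and xy: "\<mu> (fabs UNIV \<mu> x) (fabs UNIV \<mu> y) > 1/2"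
      have "\<nu> (fabs (range T) \<nu> (T x)) (fabs (range T) \<nu> (T y)) > 1/2"
        using mono[OF xy] abs_range[OF assms(2,3)] by simp
      then show "x \<in> T -` B" using B y unfolding fuzzy_ideal_def fuzzy_solid_def by blast
    qed simp
  next
    fix B assume B: "fuzzy_ideal UNIV \<nu> B"
    show "fuzzy_ideal UNIV \<mu> (T -` B)"
      unfolding fuzzy_ideal_def fuzzy_solid_def
    proof (intro conjI ballI impI)
      show "subspace (T -` B)" using B sub_vimage[OF lin] unfolding fuzzy_ideal_def by blast
    next
      fix x y assume y: "y \<in> T -` B" and xy: "\<mu> (fabs UNIV \<mu> x) (fabs UNIV \<mu> y) > 1/2"
      have "\<nu> (fabs UNIV \<nu> (T x)) (fabs UNIV \<nu> (T y)) > 1/2"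
        using mono[OF xy] abs_univ[OF assms(2,3)] by simp
      then show "x \<in> T -` B" using B y unfolding fuzzy_ideal_def fuzzy_solid_def by blast
    qed simp
  qed
qed

end
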